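(* Let $A\subset\mathbb{Z}^n$ and $B\subset A$. If $B$ is strongly neighborly in $A$ then $B$ is neighborly in $A$; conversely, if $A$ is generic and $B$ is neighborly, then $B$ is strongly neighborly.
   Context: For $\alpha,\beta\in\mathbb{Z}^n$: $\alpha\ll\beta$ iff $\alpha_i<\beta_i$ for all $i$; $\vee$ is the componentwise maximum. $T_\eta=\eta-\mathbb{N}^n$, $T^o_\eta=\{\beta\in\mathbb{Z}^n:\beta\ll\eta\}$; for nonempty $X\subseteq\{1,\dots,n\}$ the $X$-face of $T_\eta$ is $\{\alpha\in T_\eta:\alpha_i=\eta_i\ \forall i\in X\}$. $A$ is generic if for all $\eta$ with $T^o_\eta\cap A=\emptyset$, each face of $T_\eta$ contains at most one element of $A$. A (finite, nonempty) $B\subseteq A$ is neighborly if $T^o_{\vee B}\cap A=\emptyset$; it is strongly neighborly if for every $B'\subseteq A$ with $\vee B'=\vee B$ one has $B'=B$. *)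

theory Defs
  imports Main
begin

(* Points of Z^n are modelled as functions 'n \<Rightarrow> int for a finite index type 'n
   (n = CARD('n)). *)

definition ll :: "('n::finite \<Rightarrow> int) \<Rightarrow> ('n \<Rightarrow> int) \<Rightarrow> bool" where
  "ll a b \<longleftrightarrow> (\<forall>i. a i < b i)"

definition join :: "('n::finite \<Rightarrow> int) set \<Rightarrow> ('n \<Rightarrow> int)" where
  "join B = (\<lambda>i. Max ((\<lambda>b. b i) ` B))"

definition Tcone :: "('n::finite \<Rightarrow> int) \<Rightarrow> ('n \<Rightarrow> int) set" where
  "Tcone \<eta> = {\<alpha>. \<forall>i. \<alpha> i \<le> \<eta> i}"

definition Tint :: "('n::finite \<Rightarrow> int) \<Rightarrow> ('n \<Rightarrow> int) set" where
  "Tint \<eta> = {\<beta>. ll \<beta> \<eta>}"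

definition face :: "'n set \<Rightarrow> ('n::finite \<Rightarrow> int) \<Rightarrow> ('n \<Rightarrow> int) set" where
  "face X \<eta> = {\<alpha> \<in> Tcone \<eta>. \<forall>i\<in>X. \<alpha> i = \<eta> i}"

definition generic :: "('n::finite \<Rightarrow> int) set \<Rightarrow> bool" where
  "generic A \<longleftrightarrow> (\<forall>\<eta>. Tint \<eta> \<inter> A = {} \<longrightarrow>
     (\<forall>X. X \<noteq> {} \<longrightarrow> (\<forall>a b. a \<in> face X \<eta> \<inter> A \<longrightarrow> b \<in> face X \<eta> \<inter> A \<longrightarrow> a = b)))"

definition neighborly :: "('n::finite \<Rightarrow> int) set \<Rightarrow> ('n \<Rightarrow> int) set \<Rightarrow> bool" where
  "neighborly A B \<longleftrightarrow> finite B \<and> B \<noteq> {} \<and> B \<subseteq> A \<and> Tint (join B) \<inter> A = {}"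

definition strongly_neighborly :: "('n::finite \<Rightarrow> int) set \<Rightarrow> ('n \<Rightarrow> int) set \<Rightarrow> bool" where
  "strongly_neighborly A B \<longleftrightarrow> finite B \<and> B \<noteq> {} \<and> B \<subseteq> A \<and>
     (\<forall>B'. B' \<subseteq> A \<and> finite B' \<and> B' \<noteq> {} \<and> join B' = join B \<longrightarrow> B' = B)"

end

theory Submission
  imports Defs
begin

lemma join_ge: "finite S \<Longrightarrow> b \<in> S \<Longrightarrow> b i \<le> join S i"
  unfolding join_def by simp

lemma join_attained: "finite S \<Longrightarrow> S \<noteq> {} \<Longrightarrow> \<exists>b\<in>S. b i = join S i"
proof -
  assume "finite S" "S \<noteq> {}"
  then have "Max ((\<lambda>b. b i) ` S) \<in> (\<lambda>b. b i) ` S" by (intro Max_in) auto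
  then show ?thesis unfolding join_def by auto
qed

lemma face_mem: "finite S \<Longrightarrow> b \<in> S \<Longrightarrow> b i = join S i \<Longrightarrow> b \<in> face {i} (join S)"
  unfolding face_def Tcone_def using join_ge by auto

lemma sub_lemma:
  assumes gen: "generic A" and nb: "Tint (join B) \<inter> A = {}"
    and fB: "finite B" "B \<noteq> {}" "B \<subseteq> A"
    and fB': "finite B'" "B' \<subseteq> A" and eq: "join B' = join B"
  shows "B' \<subseteq> B"
proof
  fix b' assume b': "b' \<in> B'"
  have "b' \<notin> Tint (join B)" using nb b' fB' by auto
  then obtain i where i: "\<not> b' i < join B i" unfolding Tint_def ll_def by auto
  have "b' i \<le> join B i" using join_ge[OF fB'(1) b'] eq by simp
  with i have bi: "b' i = join B i" by simp
  obtain b where b: "b \<in> B" "b i = join B i" using join_attained[OF fB(1,2)] by blast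
  have f1: "b' \<in> face {i} (join B)" using face_mem[OF fB'(1) b'] bi eq by simp
  have f2: "b \<in> face {i} (join B)" using face_mem[OF fB(1) b(1) b(2)] .
  have G: "\<And>X a b. X \<noteq> {} \<Longrightarrow> a \<in> face X (join B) \<inter> A \<Longrightarrow> b \<in> face X (join B) \<inter> A \<Longrightarrow> a = b"
    using gen nb unfolding generic_def by blast
  have "b' = b" by (rule G[of "{i}"]) (use f1 f2 b(1) b' fB(3) fB'(2) in auto)
  then show "b' \<in> B" using b by simp
qed

theorem mainTheorem4:
  fixes A B :: "('n::finite \<Rightarrow> int) set"
  assumes "B \<subseteq> A" and "finite B" and "B \<noteq> {}"
  shows "(strongly_neighborly A B \<longrightarrow> neighborly A B) \<and>
         (generic A \<and> neighborly A B \<longrightarrow> strongly_neighborly A B)"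
proof (intro conjI impI)
  assume sn: "strongly_neighborly A B"
  show "neighborly A B"
    unfolding neighborly_def
  proof (intro conjI)
    show "Tint (join B) \<inter> A = {}"
    proof (rule ccontr)
      assume "Tint (join B) \<inter> A \<noteq> {}"
      then obtain a where a: "a \<in> A" "\<forall>i. a i < join B i" unfolding Tint_def ll_def by auto
      let ?B' = "insert a B - {a}"
      have jeq: "join (B - {a}) = join B"
      proof
        fix i
        obtain b where b: "b \<in> B" "b i = join B i" using join_attained[OF assms(2,3)] by blast
        have ba: "b \<noteq> a" using a(2)[rule_format, of i] b by auto
        have ne: "B - {a} \<noteq> {}" using b ba by auto
        have "b i \<le> join (B - {a}) i" using join_ge[of "B - {a}" b i] b(1) ba assms(2) by simp
        moreover obtain c where "c \<in> B - {a}" "c i = join (B - {a}) i"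
          using join_attained[of "B - {a}" i] ne assms(2) by auto
        moreover have "c i \<le> join B i" if "c \<in> B" for c using join_ge[OF assms(2) that] .
        ultimately show "join (B - {a}) i = join B i" using b
          by (metis DiffD1 order_antisym)
      qed
      have jins: "join (insert a B) = join B"
      proof
        fix i
        have "a i \<le> join B i" using a(2) by (simp add: order_less_imp_le)
        then show "join (insert a B) i = join B i"
          unfolding join_def using assms(2,3) by (simp add: max_def)
      qed
      have SN: "\<And>B'. B' \<subseteq> A \<Longrightarrow> finite B' \<Longrightarrow> B' \<noteq> {} \<Longrightarrow> join B' = join B \<Longrightarrow> B' = B"
        using sn unfolding strongly_neighborly_def by blast
      have "insert a B = B" by (rule SN) (use jins a(1) assms in auto)
      then have aB: "a \<in> B" by auto
      obtain i :: 'n where True by simp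
      obtain b where b: "b \<in> B" "b i = join B i" using join_attained[OF assms(2,3)] by blast
      have ne: "B - {a} \<noteq> {}" using b a(2)[rule_format, of i] by auto
      have "B - {a} = B" by (rule SN) (use jeq ne assms in auto)
      then show False using aB by auto
    qed
  qed (use assms in auto)
next
  assume h: "generic A \<and> neighborly A B"
  then have nb: "Tint (join B) \<inter> A = {}" unfolding neighborly_def by auto
  show "strongly_neighborly A B"
    unfolding strongly_neighborly_def
  proof (intro conjI allI impI)
    fix B' assume B': "B' \<subseteq> A \<and> finite B' \<and> B' \<noteq> {} \<and> join B' = join B"
    have nb': "Tint (join B') \<inter> A = {}" using nb B' by simp
    have "B' \<subseteq> B" using sub_lemma[OF conjunct1[OF h] nb assms(2,3,1)] B' by blast
    moreover have "B \<subseteq> B'" using sub_lemma[OF conjunct1[OF h] nb'] B' assms by metis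
    ultimately show "B' = B" by blast
  qed (use assms in auto)
qed

end
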